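(* Let $X$ and $Y$ be $\omega$ type $P$-spaces. Then the product topology of $\Sigma\mathcal O(X)$ and $\Sigma\mathcal O(Y)$ coincides with the Scott topology of the product poset $\mathcal O(X)\times\mathcal O(Y)$, i.e. $\Sigma\mathcal O(X)\times\Sigma\mathcal O(Y)=\Sigma(\mathcal O(X)\times\mathcal O(Y))$.
   Context: $\mathcal O(X)$ is the lattice of open subsets of $X$ ordered by inclusion; for a poset $L$, $\Sigma L$ denotes $L$ with the Scott topology (a set $U$ is Scott open iff it is an upper set and for every directed $D$ with existing supremum, $\bigvee D\in U$ implies $D\cap U\neq\emptyset$); $\mathcal O(X)\times\mathcal O(Y)$ has the coordinatewise order. A topological space is an $\omega$ type space if it has a subbase consisting of countable subsets. A space is a $P$-space if the intersection of any countable family of open sets is open. *)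

theory Defs
  imports "HOL-Analysis.Analysis"
begin

definition subbase_of :: "'a topology \<Rightarrow> 'a set set \<Rightarrow> bool" where
  "subbase_of X S \<longleftrightarrow>
     (\<forall>A\<in>S. openin X A) \<and>
     topology (arbitrary union_of (finite intersection_of (\<lambda>A. A \<in> S) relative_to topspace X)) = X"

definition omega_type_space :: "'a topology \<Rightarrow> bool" where
  "omega_type_space X \<longleftrightarrow> (\<exists>S. subbase_of X S \<and> (\<forall>A\<in>S. countable A))"

definition P_space :: "'a topology \<Rightarrow> bool" where
  "P_space X \<longleftrightarrow>
     (\<forall>\<F>. countable \<F> \<and> \<F> \<noteq> {} \<and> (\<forall>U\<in>\<F>. openin X U) \<longrightarrow> openin X (\<Inter>\<F>))"

definition directed_in :: "'c set \<Rightarrow> ('c \<Rightarrow> 'c \<Rightarrow> bool) \<Rightarrow> 'c set \<Rightarrow> bool" where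
  "directed_in L le D \<longleftrightarrow> D \<subseteq> L \<and> D \<noteq> {} \<and>
     (\<forall>x\<in>D. \<forall>y\<in>D. \<exists>z\<in>D. le x z \<and> le y z)"

definition is_lub_in :: "'c set \<Rightarrow> ('c \<Rightarrow> 'c \<Rightarrow> bool) \<Rightarrow> 'c set \<Rightarrow> 'c \<Rightarrow> bool" where
  "is_lub_in L le D s \<longleftrightarrow> s \<in> L \<and> (\<forall>x\<in>D. le x s) \<and>
     (\<forall>u\<in>L. (\<forall>x\<in>D. le x u) \<longrightarrow> le s u)"

definition scott_open :: "'c set \<Rightarrow> ('c \<Rightarrow> 'c \<Rightarrow> bool) \<Rightarrow> 'c set \<Rightarrow> bool" where
  "scott_open L le U \<longleftrightarrow> U \<subseteq> L \<and>
     (\<forall>x\<in>U. \<forall>y\<in>L. le x y \<longrightarrow> y \<in> U) \<and>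
     (\<forall>D s. directed_in L le D \<and> is_lub_in L le D s \<and> s \<in> U \<longrightarrow> D \<inter> U \<noteq> {})"

definition scott_topology :: "'c set \<Rightarrow> ('c \<Rightarrow> 'c \<Rightarrow> bool) \<Rightarrow> 'c topology" where
  "scott_topology L le = topology (scott_open L le)"

definition opens :: "'a topology \<Rightarrow> 'a set set" where
  "opens X = {U. openin X U}"

end

theory Submission imports Defs begin

definition nb :: "'a topology \<Rightarrow> 'a \<Rightarrow> 'a set" where
  "nb X x = \<Inter>{U. openin X U \<and> x \<in> U}"

lemma nb_open:
  assumes "omega_type_space X" "P_space X" "x \<in> topspace X"
  shows "openin X (nb X x)"
proof -
  obtain S where sb: "subbase_of X S" and cS: "\<forall>A\<in>S. countable A"
    using assms(1) unfolding omega_type_space_def by blast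
  have oS: "\<And>A. A \<in> S \<Longrightarrow> openin X A" using sb unfolding subbase_of_def by blast
  have eqX: "topology (arbitrary union_of (finite intersection_of (\<lambda>A. A \<in> S) relative_to topspace X)) = X"
    using sb unfolding subbase_of_def by blast
  have key: "topspace X \<inter> \<Inter>{A\<in>S. x\<in>A} \<subseteq> U" if U: "openin X U" "x \<in> U" for U
  proof -
    have "(arbitrary union_of (finite intersection_of (\<lambda>A. A \<in> S) relative_to topspace X)) U"
      using U(1) eqX openin_subbase by metis
    then obtain \<U> where U1: "\<And>B. B \<in> \<U> \<Longrightarrow> \<exists>F. finite F \<and> F \<subseteq> S \<and> B = topspace X \<inter> \<Inter>F"
        and U2: "\<Union>\<U> = U"
      unfolding union_of_def intersection_of_def relative_to_def by (auto simp: subset_iff) (metis inf_commute)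
    then obtain B where "B \<in> \<U>" "x \<in> B" using U(2) by auto
    then obtain F where F: "finite F" "F \<subseteq> S" "B = topspace X \<inter> \<Inter>F" using U1 by blast
    then have "topspace X \<inter> \<Inter>{A\<in>S. x\<in>A} \<subseteq> B" using \<open>x \<in> B\<close> by auto
    then show ?thesis using U2 \<open>B \<in> \<U>\<close> by auto
  qed
  have nbeq: "nb X x = topspace X \<inter> \<Inter>{A\<in>S. x\<in>A}"
  proof
    show "nb X x \<subseteq> topspace X \<inter> \<Inter>{A\<in>S. x\<in>A}"
      unfolding nb_def using assms(3) oS by auto
    show "topspace X \<inter> \<Inter>{A\<in>S. x\<in>A} \<subseteq> nb X x"
      unfolding nb_def using key by auto
  qed
  show ?thesis
  proof (cases "{A\<in>S. x\<in>A} = {}")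
    case True
    then have "nb X x = topspace X" using nbeq by (metis Inter_empty inf_top.right_neutral)
    then show ?thesis by simp
  next
    case False
    then obtain A0 where A0: "A0 \<in> S" "x \<in> A0" by auto
    define g where "g y = (SOME A. A \<in> S \<and> x \<in> A \<and> y \<notin> A)" for y
    have g: "g y \<in> S \<and> x \<in> g y \<and> y \<notin> g y" if "y \<in> A0 - nb X x" for y
    proof -
      have "y \<in> topspace X" using that A0 oS openin_subset by blast
      then have "\<exists>A. A \<in> S \<and> x \<in> A \<and> y \<notin> A" using that nbeq by auto
      then show ?thesis unfolding g_def by (rule someI_ex)
    qed
    define \<F> where "\<F> = insert A0 (g ` (A0 - nb X x))"
    have "countable \<F>" unfolding \<F>_def using cS A0 by auto
    moreover have "\<F> \<noteq> {}" unfolding \<F>_def by auto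
    moreover have "\<forall>U\<in>\<F>. openin X U" unfolding \<F>_def using oS A0 g by auto
    ultimately have "openin X (\<Inter>\<F>)" using assms(2) unfolding P_space_def by blast
    moreover have "\<Inter>\<F> = nb X x"
    proof
      show "\<Inter>\<F> \<subseteq> nb X x"
      proof
        fix z assume z: "z \<in> \<Inter>\<F>"
        then have "z \<in> A0" unfolding \<F>_def by auto
        show "z \<in> nb X x"
        proof (rule ccontr)
          assume "z \<notin> nb X x"
          then have "g z \<in> \<F>" "z \<notin> g z" unfolding \<F>_def using g \<open>z \<in> A0\<close> by auto
          then show False using z by auto
        qed
      qed
      show "nb X x \<subseteq> \<Inter>\<F>" unfolding \<F>_def using nbeq g A0 by auto
    qed
    ultimately show ?thesis by simp
  qed
qed

lemma istopology_scott: "istopology (scott_open L le)"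
  unfolding istopology_def
proof (intro conjI allI impI)
  fix S T assume S: "scott_open L le S" and T: "scott_open L le T"
  show "scott_open L le (S \<inter> T)"
    unfolding scott_open_def
  proof (intro conjI allI impI ballI)
    show "S \<inter> T \<subseteq> L" using S unfolding scott_open_def by blast
  next
    fix x y assume "x \<in> S \<inter> T" "y \<in> L" "le x y"
    then show "y \<in> S \<inter> T" using S T unfolding scott_open_def by blast
  next
    fix D s assume H: "directed_in L le D \<and> is_lub_in L le D s \<and> s \<in> S \<inter> T"
    then obtain a b where ab: "a \<in> D" "a \<in> S" "b \<in> D" "b \<in> T"
      using S T unfolding scott_open_def by blast
    then obtain c where c: "c \<in> D" "le a c" "le b c"
      using H unfolding directed_in_def by blast
    have "c \<in> L" using c H unfolding directed_in_def by blast
    then have "c \<in> S \<inter> T" using S T ab c unfolding scott_open_def by blast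
    then show "D \<inter> (S \<inter> T) \<noteq> {}" using c by blast
  qed
next
  fix K assume K: "\<forall>S\<in>K. scott_open L le S"
  show "scott_open L le (\<Union>K)"
    unfolding scott_open_def
  proof (intro conjI allI impI ballI)
    show "\<Union>K \<subseteq> L" using K unfolding scott_open_def by blast
  next
    fix x y assume "x \<in> \<Union>K" "y \<in> L" "le x y"
    then show "y \<in> \<Union>K" using K unfolding scott_open_def by blast
  next
    fix D s assume H: "directed_in L le D \<and> is_lub_in L le D s \<and> s \<in> \<Union>K"
    then obtain S where "S \<in> K" "s \<in> S" by blast
    then have "D \<inter> S \<noteq> {}" using K H unfolding scott_open_def by blast
    then show "D \<inter> \<Union>K \<noteq> {}" using \<open>S \<in> K\<close> by blast
  qed
qed

lemma openin_scott: "openin (scott_topology L le) = scott_open L le"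
  unfolding scott_topology_def by (rule topology_inverse'[OF istopology_scott])

lemma topspace_scott: "topspace (scott_topology L le) = L"
proof -
  have "scott_open L le L" unfolding scott_open_def directed_in_def by blast
  then show ?thesis unfolding topspace_def openin_scott scott_open_def by blast
qed

lemma dir_bound:
  assumes D: "directed_in L (\<subseteq>) D" and F: "finite F"
    and ex: "\<forall>x\<in>F. \<exists>d\<in>D. P x d"
    and mono: "\<And>x d d'. P x d \<Longrightarrow> d \<subseteq> d' \<Longrightarrow> P x d'"
  shows "\<exists>d\<in>D. \<forall>x\<in>F. P x d"
  using F ex
proof (induction F rule: finite_induct)
  case empty
  from D have "D \<noteq> {}" unfolding directed_in_def by blast
  then show ?case by auto
next
  case (insert a F)
  then obtain d where d: "d \<in> D" "\<forall>x\<in>F. P x d" by blast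
  obtain d' where d': "d' \<in> D" "P a d'" using insert by blast
  obtain z where "z \<in> D" "d \<subseteq> z" "d' \<subseteq> z" using D d d' unfolding directed_in_def by blast
  then show ?case using d d' mono by blast
qed

lemma nb_props:
  assumes "openin X U" "x \<in> U"
  shows "x \<in> nb X x" "nb X x \<subseteq> U"
  using assms unfolding nb_def by auto

lemma up_scott:
  assumes alex: "\<forall>x\<in>topspace X. openin X (nb X x)"
    and F: "finite F" "F \<subseteq> topspace X"
  shows "scott_open (opens X) (\<subseteq>) {U'\<in>opens X. \<Union>(nb X ` F) \<subseteq> U'}"
  unfolding scott_open_def
proof (intro conjI allI impI ballI)
  fix D s assume H: "directed_in (opens X) (\<subseteq>) D \<and> is_lub_in (opens X) (\<subseteq>) D s \<and>
      s \<in> {U' \<in> opens X. \<Union> (nb X ` F) \<subseteq> U'}"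
  have Dsub: "D \<subseteq> opens X" using H unfolding directed_in_def by simp
  have "\<Union>D \<in> opens X" using Dsub unfolding opens_def by auto
  then have "s \<subseteq> \<Union>D" using H unfolding is_lub_in_def by blast
  have "\<forall>x\<in>F. \<exists>d\<in>D. nb X x \<subseteq> d"
  proof
    fix x assume "x \<in> F"
    have "x \<in> nb X x" unfolding nb_def by auto
    then have "x \<in> \<Union>D" using H \<open>s \<subseteq> \<Union>D\<close> \<open>x \<in> F\<close> by blast
    then obtain d where "d \<in> D" "x \<in> d" by blast
    then have "openin X d" using Dsub unfolding opens_def by auto
    then show "\<exists>d\<in>D. nb X x \<subseteq> d" using nb_props(2)[OF \<open>openin X d\<close> \<open>x \<in> d\<close>] \<open>d \<in> D\<close> by blast
  qed
  moreover have "directed_in (opens X) (\<subseteq>) D" using H by blast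
  ultimately obtain d where "d \<in> D" "\<forall>x\<in>F. nb X x \<subseteq> d"
    using dir_bound[of "opens X" D F "\<lambda>x d. nb X x \<subseteq> d"] F(1) by blast
  moreover have "d \<in> opens X" using Dsub \<open>d \<in> D\<close> by blast
  ultimately show "D \<inter> {U' \<in> opens X. \<Union> (nb X ` F) \<subseteq> U'} \<noteq> {}" by blast
next
  show "{U' \<in> opens X. \<Union> (nb X ` F) \<subseteq> U'} \<subseteq> opens X" by blast
next
  fix x y assume "x \<in> {U' \<in> opens X. \<Union> (nb X ` F) \<subseteq> U'}" "y \<in> opens X" "x \<subseteq> y"
  then show "y \<in> {U' \<in> opens X. \<Union> (nb X ` F) \<subseteq> U'}" by blast
qed


lemma main:
  fixes X :: "'a topology" and Y :: "'b topology"
  assumes alexX: "\<forall>x\<in>topspace X. openin X (nb X x)"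
    and alexY: "\<forall>x\<in>topspace Y. openin Y (nb Y x)"
  shows "prod_topology (scott_topology (opens X) (\<subseteq>)) (scott_topology (opens Y) (\<subseteq>))
         = scott_topology (opens X \<times> opens Y)
             (\<lambda>p q. fst p \<subseteq> fst q \<and> snd p \<subseteq> snd q)"
  (is "?P = scott_topology ?L ?le")
proof -
  have key: "openin ?P W \<longleftrightarrow> scott_open ?L ?le W" for W
  proof
    assume P: "openin ?P W"
    have PU: "\<exists>U V. scott_open (opens X) (\<subseteq>) U \<and> scott_open (opens Y) (\<subseteq>) V \<and> a \<in> U \<and> b \<in> V \<and> U \<times> V \<subseteq> W"
      if "(a,b) \<in> W" for a b
    proof -
      have "\<forall>x y. (x,y) \<in> W \<longrightarrow> (\<exists>U V. openin (scott_topology (opens X) (\<subseteq>)) U \<and> openin (scott_topology (opens Y) (\<subseteq>)) V \<and> x \<in> U \<and> y \<in> V \<and> U \<times> V \<subseteq> W)"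
        using P by (subst (asm) openin_prod_topology_alt)
      from this[rule_format, OF that] show ?thesis unfolding openin_scott .
    qed
    show "scott_open ?L ?le W"
      unfolding scott_open_def
    proof (intro conjI allI impI ballI)
      show "W \<subseteq> ?L" using openin_subset[OF P] by (simp add: topspace_scott)
    next
      fix p q assume H: "p \<in> W" "q \<in> ?L" "?le p q"
      obtain a b c d where ab: "p = (a,b)" "q = (c,d)" by (cases p, cases q) auto
      have "(a,b) \<in> W" using H(1) ab by simp
      from PU[OF this] obtain U V where UV: "scott_open (opens X) (\<subseteq>) U" "scott_open (opens Y) (\<subseteq>) V" "a \<in> U" "b \<in> V" "U \<times> V \<subseteq> W"
        by blast
      have "c \<in> U" using UV(1,3) H(2,3) ab unfolding scott_open_def by auto
      moreover have "d \<in> V" using UV(2,4) H(2,3) ab unfolding scott_open_def by auto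
      ultimately show "q \<in> W" using UV(5) ab by blast
    next
      fix D s assume H: "directed_in ?L ?le D \<and> is_lub_in ?L ?le D s \<and> s \<in> W"
      obtain s1 s2 where s: "s = (s1,s2)" by (cases s) auto
      have "(s1,s2) \<in> W" using H s by simp
      from PU[OF this] obtain U V where UV: "scott_open (opens X) (\<subseteq>) U" "scott_open (opens Y) (\<subseteq>) V" "s1 \<in> U" "s2 \<in> V" "U \<times> V \<subseteq> W"
        by blast
      have H1: "directed_in ?L ?le D" and H2: "is_lub_in ?L ?le D s" using H by simp_all
      have DL: "D \<subseteq> ?L" "D \<noteq> {}" "\<forall>x\<in>D. \<forall>y\<in>D. \<exists>z\<in>D. ?le x z \<and> ?le y z"
        using H1 unfolding directed_in_def by blast+
      have sL: "s \<in> ?L" "\<forall>x\<in>D. ?le x s" "\<forall>u\<in>?L. (\<forall>x\<in>D. ?le x u) \<longrightarrow> ?le s u"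
        using H2 unfolding is_lub_in_def by blast+
      have d1: "directed_in (opens X) (\<subseteq>) (fst ` D)"
        unfolding directed_in_def
      proof (intro conjI ballI)
        show "fst ` D \<subseteq> opens X" using DL(1) by auto
        show "fst ` D \<noteq> {}" using DL(2) by simp
        fix x y assume "x \<in> fst ` D" "y \<in> fst ` D"
        then obtain x' y' where "x' \<in> D" "y' \<in> D" "x = fst x'" "y = fst y'" by blast
        then obtain z where "z \<in> D" "?le x' z" "?le y' z" using DL(3) by meson
        then show "\<exists>z\<in>fst ` D. x \<subseteq> z \<and> y \<subseteq> z" using \<open>x = fst x'\<close> \<open>y = fst y'\<close> by (metis image_eqI)
      qed
      have l1: "is_lub_in (opens X) (\<subseteq>) (fst ` D) s1"
        unfolding is_lub_in_def
      proof (intro conjI ballI impI)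
        show "s1 \<in> opens X" using sL s by auto
        show "x \<subseteq> s1" if "x \<in> fst ` D" for x using that sL s by auto
        fix u assume "u \<in> opens X" "\<forall>x\<in>fst ` D. x \<subseteq> u"
        then have "(u,s2) \<in> ?L" "\<forall>x\<in>D. ?le x (u,s2)" using sL s DL by auto
        then show "s1 \<subseteq> u" using sL s by fastforce
      qed
      have d2: "directed_in (opens Y) (\<subseteq>) (snd ` D)"
        unfolding directed_in_def
      proof (intro conjI ballI)
        show "snd ` D \<subseteq> opens Y" using DL(1) by auto
        show "snd ` D \<noteq> {}" using DL(2) by simp
        fix x y assume "x \<in> snd ` D" "y \<in> snd ` D"
        then obtain x' y' where "x' \<in> D" "y' \<in> D" "x = snd x'" "y = snd y'" by blast
        then obtain z where "z \<in> D" "?le x' z" "?le y' z" using DL(3) by meson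
        then show "\<exists>z\<in>snd ` D. x \<subseteq> z \<and> y \<subseteq> z" using \<open>x = snd x'\<close> \<open>y = snd y'\<close> by (metis image_eqI)
      qed
      have l2: "is_lub_in (opens Y) (\<subseteq>) (snd ` D) s2"
        unfolding is_lub_in_def
      proof (intro conjI ballI impI)
        show "s2 \<in> opens Y" using sL s by auto
        show "x \<subseteq> s2" if "x \<in> snd ` D" for x using that sL s by auto
        fix u assume "u \<in> opens Y" "\<forall>x\<in>snd ` D. x \<subseteq> u"
        then have "(s1,u) \<in> ?L" "\<forall>x\<in>D. ?le x (s1,u)" using sL s DL by auto
        then show "s2 \<subseteq> u" using sL s by fastforce
      qed
      have "fst ` D \<inter> U \<noteq> {}" using UV(1,3) d1 l1 unfolding scott_open_def by blast
      then obtain e1 where e1: "e1 \<in> D" "fst e1 \<in> U" by blast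
      have "snd ` D \<inter> V \<noteq> {}" using UV(2,4) d2 l2 unfolding scott_open_def by blast
      then obtain e2 where e2: "e2 \<in> D" "snd e2 \<in> V" by blast
      obtain e3 where e3: "e3 \<in> D" "?le e1 e3" "?le e2 e3" using DL(3) e1 e2 by meson
      have "e3 \<in> ?L" using e3 DL by (meson subsetD)
      have upU: "\<And>x y. x \<in> U \<Longrightarrow> y \<in> opens X \<Longrightarrow> x \<subseteq> y \<Longrightarrow> y \<in> U"
        using UV(1) unfolding scott_open_def by meson
      have upV: "\<And>x y. x \<in> V \<Longrightarrow> y \<in> opens Y \<Longrightarrow> x \<subseteq> y \<Longrightarrow> y \<in> V"
        using UV(2) unfolding scott_open_def by meson
      have "fst e3 \<in> U" using upU[OF e1(2)] e3(2) \<open>e3 \<in> ?L\<close> by (simp add: mem_Times_iff)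
      moreover have "snd e3 \<in> V" using upV[OF e2(2)] e3(3) \<open>e3 \<in> ?L\<close> by (simp add: mem_Times_iff)
      ultimately have "e3 \<in> W" using UV(5) by (cases e3) auto
      then show "D \<inter> W \<noteq> {}" using e3 by blast
    qed
  next
    assume S: "scott_open ?L ?le W"
    have WL: "W \<subseteq> ?L" and Wup: "\<And>x y. x \<in> W \<Longrightarrow> y \<in> ?L \<Longrightarrow> ?le x y \<Longrightarrow> y \<in> W"
      and Win: "\<And>D s. directed_in ?L ?le D \<Longrightarrow> is_lub_in ?L ?le D s \<Longrightarrow> s \<in> W \<Longrightarrow> D \<inter> W \<noteq> {}"
      using S unfolding scott_open_def by blast+
    show "openin ?P W"
      unfolding openin_prod_topology_alt openin_scott
    proof (intro allI impI)
      fix U V assume UVW: "(U,V) \<in> W"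
      then have oU: "openin X U" and oV: "openin Y V" using WL unfolding opens_def by auto
      define D where "D = {(\<Union>(nb X ` F), \<Union>(nb Y ` G)) | F G. finite F \<and> F \<subseteq> U \<and> finite G \<and> G \<subseteq> V}"
      have tU: "U \<subseteq> topspace X" using oU by (rule openin_subset)
      have tV: "V \<subseteq> topspace Y" using oV by (rule openin_subset)
      have nbU: "\<And>x. x \<in> U \<Longrightarrow> openin X (nb X x) \<and> x \<in> nb X x \<and> nb X x \<subseteq> U"
        using alexX tU nb_props[OF oU] by blast
      have nbV: "\<And>x. x \<in> V \<Longrightarrow> openin Y (nb Y x) \<and> x \<in> nb Y x \<and> nb Y x \<subseteq> V"
        using alexY tV nb_props[OF oV] by blast
      have dirD: "directed_in ?L ?le D"
        unfolding directed_in_def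
      proof (intro conjI ballI)
        show "D \<subseteq> ?L"
        proof
          fix p assume "p \<in> D"
          then obtain F G where FG: "p = (\<Union>(nb X ` F), \<Union>(nb Y ` G))" "F \<subseteq> U" "G \<subseteq> V"
            unfolding D_def by blast
          have "openin X (\<Union>(nb X ` F))" using FG nbU by (intro openin_Union) auto
          moreover have "openin Y (\<Union>(nb Y ` G))" using FG nbV by (intro openin_Union) auto
          ultimately show "p \<in> ?L" using FG unfolding opens_def by auto
        qed
        have "(\<Union>(nb X ` {}), \<Union>(nb Y ` {})) \<in> D" unfolding D_def by blast
        then show "D \<noteq> {}" by blast
        fix p q assume "p \<in> D" "q \<in> D"
        then obtain F G F' G' where FG: "p = (\<Union>(nb X ` F), \<Union>(nb Y ` G))" "finite F" "F \<subseteq> U" "finite G" "G \<subseteq> V"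
          and FG': "q = (\<Union>(nb X ` F'), \<Union>(nb Y ` G'))" "finite F'" "F' \<subseteq> U" "finite G'" "G' \<subseteq> V"
          unfolding D_def by blast
        have "(\<Union>(nb X ` (F \<union> F')), \<Union>(nb Y ` (G \<union> G'))) \<in> D"
          unfolding D_def using FG FG' by blast
        moreover have "?le p (\<Union>(nb X ` (F \<union> F')), \<Union>(nb Y ` (G \<union> G')))" using FG by auto
        moreover have "?le q (\<Union>(nb X ` (F \<union> F')), \<Union>(nb Y ` (G \<union> G')))" using FG' by auto
        ultimately show "\<exists>z\<in>D. ?le p z \<and> ?le q z" by blast
      qed
      have lub1: "(U,V) \<in> ?L" using UVW WL by (meson subsetD)
      have lub2: "\<forall>p\<in>D. ?le p (U,V)"
      proof
        fix p assume "p \<in> D"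
        then obtain F G where FG: "p = (\<Union>(nb X ` F), \<Union>(nb Y ` G))" "F \<subseteq> U" "G \<subseteq> V"
          unfolding D_def by blast
        have "\<Union>(nb X ` F) \<subseteq> U" using FG nbU by blast
        moreover have "\<Union>(nb Y ` G) \<subseteq> V" using FG nbV by blast
        ultimately show "?le p (U,V)" using FG by simp
      qed
      have lub3: "\<forall>u\<in>?L. (\<forall>p\<in>D. ?le p u) \<longrightarrow> ?le (U,V) u"
      proof (intro ballI impI)
        fix u assume u: "u \<in> ?L" "\<forall>p\<in>D. ?le p u"
        have "U \<subseteq> fst u"
        proof
          fix x assume "x \<in> U"
          then have "(\<Union>(nb X ` {x}), \<Union>(nb Y ` {})) \<in> D" unfolding D_def by blast
          then have "nb X x \<subseteq> fst u" using u(2) by fastforce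
          then show "x \<in> fst u" using nbU \<open>x \<in> U\<close> by blast
        qed
        moreover have "V \<subseteq> snd u"
        proof
          fix x assume "x \<in> V"
          then have "(\<Union>(nb X ` {}), \<Union>(nb Y ` {x})) \<in> D" unfolding D_def by blast
          then have "nb Y x \<subseteq> snd u" using u(2) by fastforce
          then show "x \<in> snd u" using nbV \<open>x \<in> V\<close> by blast
        qed
        ultimately show "?le (U,V) u" by simp
      qed
      have lubD: "is_lub_in ?L ?le D (U,V)"
        unfolding is_lub_in_def by (rule conjI[OF lub1 conjI[OF lub2 lub3]])
      have "D \<inter> W \<noteq> {}" using Win[OF dirD lubD UVW] .
      then obtain F G where FG: "(\<Union>(nb X ` F), \<Union>(nb Y ` G)) \<in> W" "finite F" "F \<subseteq> U" "finite G" "G \<subseteq> V"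
        unfolding D_def by blast
      define A where "A = {U'\<in>opens X. \<Union>(nb X ` F) \<subseteq> U'}"
      define B where "B = {V'\<in>opens Y. \<Union>(nb Y ` G) \<subseteq> V'}"
      have "scott_open (opens X) (\<subseteq>) A" unfolding A_def
        using up_scott[OF alexX FG(2)] FG(3) tU by blast
      moreover have "scott_open (opens Y) (\<subseteq>) B" unfolding B_def
        using up_scott[OF alexY FG(4)] FG(5) tV by blast
      moreover have "U \<in> A" unfolding A_def opens_def using oU FG(3) nbU by blast
      moreover have "V \<in> B" unfolding B_def opens_def using oV FG(5) nbV by blast
      moreover have "A \<times> B \<subseteq> W"
      proof
        fix q assume "q \<in> A \<times> B"
        then have "q \<in> ?L" "?le (\<Union>(nb X ` F), \<Union>(nb Y ` G)) q" unfolding A_def B_def by auto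
        then show "q \<in> W" using Wup[OF FG(1)] by blast
      qed
      ultimately show "\<exists>A B. scott_open (opens X) (\<subseteq>) A \<and> scott_open (opens Y) (\<subseteq>) B \<and> U \<in> A \<and> V \<in> B \<and> A \<times> B \<subseteq> W"
        by blast
    qed
  qed
  show ?thesis
  proof (rule topology_eq[THEN iffD2], intro allI)
    fix W show "openin ?P W = openin (scott_topology ?L ?le) W"
      unfolding openin_scott[of ?L ?le] by (rule key)
  qed
qed

theorem theorem4p4:
  fixes X :: "'a topology" and Y :: "'b topology"
  assumes "omega_type_space X" and "P_space X"
    and "omega_type_space Y" and "P_space Y"
  shows "prod_topology (scott_topology (opens X) (\<subseteq>)) (scott_topology (opens Y) (\<subseteq>))
         = scott_topology (opens X \<times> opens Y)
             (\<lambda>p q. fst p \<subseteq> fst q \<and> snd p \<subseteq> snd q)"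
proof (rule main)
  show "\<forall>x\<in>topspace X. openin X (nb X x)" using nb_open[OF assms(1,2)] by simp
  show "\<forall>x\<in>topspace Y. openin Y (nb Y x)" using nb_open[OF assms(3,4)] by simp
qed

end
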